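(* Let ${\bf X},{\bf Y}$ be $r\times r$ complex matrices. If $\det({\bf S}{\bf X}+{\bf Y})=0$ for every $r\times r$ diagonal matrix ${\bf S}$ with diagonal entries in $\{1,-1\}$, then $\det({\bf Y})=0$. *)

theory Defs
  imports "HOL-Analysis.Analysis"
begin

end

theory Submission
  imports Defs
begin

definition MM :: "complex ^ 'n ^ 'n \<Rightarrow> complex ^ 'n ^ 'n \<Rightarrow> ('n \<Rightarrow> complex) \<Rightarrow> 'n set \<Rightarrow> complex ^ 'n ^ 'n"
  where "MM X Y s K = (\<chi> i. if i \<in> K then Y$i else s i *s X$i + Y$i)"

lemma MM_step:
  fixes X Y :: "complex ^ 'n ^ 'n"
  assumes "k \<notin> K"
  shows "det (MM X Y (s(k:=1)) K) + det (MM X Y (s(k:=-1)) K) = 2 * det (MM X Y s (insert k K))"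
proof -
  define c where "c = (\<lambda>i. MM X Y s K $ i)"
  have e1: "MM X Y (s(k:=1)) K = (\<chi> i. if i = k then X$k + Y$k else c i)"
    using assms unfolding MM_def c_def by (auto simp: vec_eq_iff)
  have e2: "MM X Y (s(k:=-1)) K = (\<chi> i. if i = k then (-1) *s X$k + Y$k else c i)"
    using assms unfolding MM_def c_def by (auto simp: vec_eq_iff)
  have e3: "MM X Y s (insert k K) = (\<chi> i. if i = k then Y$k else c i)"
    using assms unfolding MM_def c_def by (auto simp: vec_eq_iff)
  show ?thesis
    unfolding e1 e2 e3 det_row_add det_row_mul by simp
qed

theorem lemma4p15:
  fixes X Y :: "complex ^ 'n ^ 'n"
  assumes "\<And>s :: 'n \<Rightarrow> complex. (\<forall>i. s i = 1 \<or> s i = -1) \<Longrightarrow>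
             det ((\<chi> i j. if i = j then s i else 0) ** X + Y) = 0"
  shows "det Y = 0"
proof -
  have base: "(\<chi> i j. if i = j then s i else 0) ** X + Y = MM X Y s {}" for s
  proof -
    have "(\<Sum>k\<in>UNIV. (if i = k then s i else 0) * X $ k $ l) = s i * X $ i $ l" for i l
    proof -
      have "(\<Sum>k\<in>UNIV. (if i = k then s i else 0) * X $ k $ l) = (\<Sum>k\<in>UNIV. if i = k then s i * X $ k $ l else 0)"
        by (rule sum.cong) auto
      then show ?thesis by simp
    qed
    then show ?thesis unfolding MM_def by (simp add: vec_eq_iff matrix_matrix_mult_def)
  qed
  have main: "\<forall>s. (\<forall>i. s i = 1 \<or> s i = -1) \<longrightarrow> det (MM X Y s K) = 0" if "finite K" for K :: "'n set"
    using that
  proof (induction K rule: finite_induct)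
    case empty
    then show ?case using assms base by metis
  next
    case (insert k K)
    show ?case
    proof (intro allI impI)
      fix s :: "'n \<Rightarrow> complex"
      assume s: "\<forall>i. s i = 1 \<or> s i = -1"
      have "det (MM X Y (s(k:=1)) K) = 0" using insert.IH s by simp
      moreover have "det (MM X Y (s(k:=-1)) K) = 0" using insert.IH s by simp
      ultimately show "det (MM X Y s (insert k K)) = 0"
        using MM_step[OF insert.hyps(2), of X Y s] by simp
    qed
  qed
  have "MM X Y (\<lambda>_. 1) UNIV = Y" unfolding MM_def by (simp add: vec_eq_iff)
  then show ?thesis using main[of UNIV] by auto
qed

end
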